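(* If the global optional splitting formula holds at $\tau$ with respect to $\mathbb{F}$, then for every $t\ge0$, $\mathcal{G}_t=\mathcal{N}\vee\sigma(\tau\nmid t)\vee\mathcal{F}_t$.
   Context: Let $(\Omega,\mathcal{A},\mathbb{Q})$ be a probability space with a right-continuous filtration $\mathbb{F}=(\mathcal{F}_t)_{t\ge0}$ such that $\mathcal{F}_0$ contains $\mathcal{N}^{\mathcal{F}_\infty}$, where for a $\sigma$-algebra $\mathcal{T}\subset\mathcal{A}$, $\mathcal{N}^{\mathcal{T}}$ denotes the $\sigma$-algebra generated by all subsets of $\mathcal{T}$-measurable $\mathbb{Q}$-null sets. Let $\tau$ be a random variable with values in $[0,\infty]$, let $\mathcal{N}=\mathcal{N}^{\sigma(\tau)\vee\mathcal{F}_\infty}$, and let $\mathbb{G}=(\mathcal{G}_t)_{t\ge0}$ with $\mathcal{G}_t=\mathcal{N}\vee\bigcap_{s>t}(\mathcal{F}_s\vee\sigma(\tau\wedge s))$. Identities between processes are understood up to indistinguishability outside an $\mathcal{N}$-measurable $\mathbb{Q}$-null set. For a function $Y''$ on $[0,\infty]\times(\mathbb{R}_+\times\Omega)$, $Y''(\tau)$ denotes the process $(t,\omega)\mapsto Y''(\tau(\omega),t,\omega)$. The global optional splitting formula at $\tau$ (with respect to $\mathbb{F}$) holds if for every $\mathbb{G}$-optional process $Y$ there exist $Y'\in\mathcal{O}(\mathbb{F})$ and a $\mathcal{B}[0,\infty]\otimes\mathcal{O}(\mathbb{F})$-measurable function $Y''$ on $[0,\infty]\times(\mathbb{R}_+\times\Omega)$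 with $Y=Y'\mathbf{1}_{[0,\tau)}+Y''(\tau)\mathbf{1}_{[\tau,\infty)}$. For $a,b\in[0,\infty]$, $a\nmid b=a$ if $a\le b$ and $a\nmid b=\infty$ if $a>b$. *)

theory Defs
  imports "HOL-Probability.Probability"
begin

(* Time set R_+ is represented as {0..} :: real set; processes are functions on real \<times> 'a
   (only their values on {0..} \<times> \<Omega> matter). *)

definition join_sa :: "'a set \<Rightarrow> 'a set set \<Rightarrow> 'a set set \<Rightarrow> 'a set set" where
  "join_sa \<Omega> A B = sigma_sets \<Omega> (A \<union> B)"

definition gen_rv :: "'a set \<Rightarrow> ('a \<Rightarrow> ennreal) \<Rightarrow> 'a set set" where
  "gen_rv \<Omega> X = {X -` B \<inter> \<Omega> | B. B \<in> sets (borel :: ennreal measure)}"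

definition null_sa :: "'a measure \<Rightarrow> 'a set set \<Rightarrow> 'a set set" where
  "null_sa Q T = sigma_sets (space Q)
     {B. \<exists>A\<in>T. A \<in> sets Q \<and> emeasure Q A = 0 \<and> B \<subseteq> A}"

definition Qnull :: "'a measure \<Rightarrow> 'a set \<Rightarrow> bool" where
  "Qnull Q Z \<longleftrightarrow> (\<exists>Z0\<in>sets Q. Z \<subseteq> Z0 \<and> emeasure Q Z0 = 0)"

definition is_filtration :: "'a measure \<Rightarrow> (real \<Rightarrow> 'a set set) \<Rightarrow> bool" where
  "is_filtration Q F \<longleftrightarrow>
     (\<forall>t\<ge>0. sigma_algebra (space Q) (F t) \<and> F t \<subseteq> sets Q) \<and>
     (\<forall>s t. 0 \<le> s \<longrightarrow> s \<le> t \<longrightarrow> F s \<subseteq> F t)"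

definition right_continuous_filtration :: "(real \<Rightarrow> 'a set set) \<Rightarrow> bool" where
  "right_continuous_filtration F \<longleftrightarrow> (\<forall>t\<ge>0. F t = (\<Inter>s\<in>{t<..}. F s))"

definition F_infty :: "'a set \<Rightarrow> (real \<Rightarrow> 'a set set) \<Rightarrow> 'a set set" where
  "F_infty \<Omega> F = sigma_sets \<Omega> (\<Union>t\<in>{0..}. F t)"

definition cadlag_adapted :: "'a set \<Rightarrow> (real \<Rightarrow> 'a set set) \<Rightarrow> (real \<times> 'a \<Rightarrow> real) \<Rightarrow> bool" where
  "cadlag_adapted \<Omega> F X \<longleftrightarrow>
     (\<forall>t\<ge>0. \<forall>B\<in>sets (borel :: real measure). {\<omega>\<in>\<Omega>. X (t, \<omega>) \<in> B} \<in> F t) \<and>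
     (\<forall>\<omega>\<in>\<Omega>. \<forall>t\<ge>0. ((\<lambda>s. X (s, \<omega>)) \<longlongrightarrow> X (t, \<omega>)) (at_right t) \<and>
        (0 < t \<longrightarrow> (\<exists>l. ((\<lambda>s. X (s, \<omega>)) \<longlongrightarrow> l) (at_left t))))"

definition optional_sa :: "'a set \<Rightarrow> (real \<Rightarrow> 'a set set) \<Rightarrow> (real \<times> 'a) set set" where
  "optional_sa \<Omega> F = sigma_sets ({0..} \<times> \<Omega>)
     {{p \<in> {0..} \<times> \<Omega>. X p \<in> B} | X B. cadlag_adapted \<Omega> F X \<and> B \<in> sets (borel :: real measure)}"

definition optional_process :: "'a set \<Rightarrow> (real \<Rightarrow> 'a set set) \<Rightarrow> (real \<times> 'a \<Rightarrow> real) \<Rightarrow> bool" where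
  "optional_process \<Omega> F Y \<longleftrightarrow>
     (\<forall>B\<in>sets (borel :: real measure). {p \<in> {0..} \<times> \<Omega>. Y p \<in> B} \<in> optional_sa \<Omega> F)"

definition borel_optional_measurable ::
    "'a set \<Rightarrow> (real \<Rightarrow> 'a set set) \<Rightarrow> (ennreal \<Rightarrow> real \<times> 'a \<Rightarrow> real) \<Rightarrow> bool" where
  "borel_optional_measurable \<Omega> F Y'' \<longleftrightarrow>
     (\<forall>B\<in>sets (borel :: real measure).
        {(u, p). p \<in> {0..} \<times> \<Omega> \<and> Y'' u p \<in> B} \<in>
        sigma_sets (UNIV \<times> ({0..} \<times> \<Omega>))
          {A \<times> C | A C. A \<in> sets (borel :: ennreal measure) \<and> C \<in> optional_sa \<Omega> F})"

definition N_sa :: "'a measure \<Rightarrow> (real \<Rightarrow> 'a set set) \<Rightarrow> ('a \<Rightarrow> ennreal) \<Rightarrow> 'a set set" where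
  "N_sa Q F \<tau> = null_sa Q (join_sa (space Q) (gen_rv (space Q) \<tau>) (F_infty (space Q) F))"

definition G_filt :: "'a measure \<Rightarrow> (real \<Rightarrow> 'a set set) \<Rightarrow> ('a \<Rightarrow> ennreal) \<Rightarrow> real \<Rightarrow> 'a set set" where
  "G_filt Q F \<tau> t = join_sa (space Q) (N_sa Q F \<tau>)
     (\<Inter>s\<in>{t<..}. join_sa (space Q) (F s) (gen_rv (space Q) (\<lambda>\<omega>. min (\<tau> \<omega>) (ennreal s))))"

definition nmid :: "ennreal \<Rightarrow> ennreal \<Rightarrow> ennreal" where
  "nmid a b = (if a \<le> b then a else \<infinity>)"

definition global_optional_splitting ::
    "'a measure \<Rightarrow> (real \<Rightarrow> 'a set set) \<Rightarrow> ('a \<Rightarrow> ennreal) \<Rightarrow> bool" where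
  "global_optional_splitting Q F \<tau> \<longleftrightarrow>
     (\<forall>Y. optional_process (space Q) (G_filt Q F \<tau>) Y \<longrightarrow>
        (\<exists>Y' Y''. optional_process (space Q) F Y' \<and>
           borel_optional_measurable (space Q) F Y'' \<and>
           (\<exists>Z\<in>N_sa Q F \<tau>. Qnull Q Z \<and>
              (\<forall>\<omega>\<in>space Q - Z. \<forall>t\<ge>0.
                 Y (t, \<omega>) = (if ennreal t < \<tau> \<omega> then Y' (t, \<omega>) else Y'' (\<tau> \<omega>) (t, \<omega>))))))"

end

theory Submission
  imports Defs
begin

lemma sa_empty: "sigma_algebra \<Omega> M \<Longrightarrow> {} \<in> M"
  by (auto simp: sigma_algebra_iff2)

lemma sa_compl: assumes "sigma_algebra \<Omega> M" "a \<in> M" shows "\<Omega> - a \<in> M"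
proof - interpret sigma_algebra \<Omega> M by fact show ?thesis using assms(2) by (rule compl_sets) qed
lemma sa_Int: assumes "sigma_algebra \<Omega> M" "a \<in> M" "b \<in> M" shows "a \<inter> b \<in> M"
proof - interpret sigma_algebra \<Omega> M by fact show ?thesis using assms(2,3) by (rule Int) qed
lemma sa_Un: assumes "sigma_algebra \<Omega> M" "a \<in> M" "b \<in> M" shows "a \<union> b \<in> M"
proof - interpret sigma_algebra \<Omega> M by fact show ?thesis using assms(2,3) by (rule Un) qed
lemma sa_Diff: assumes "sigma_algebra \<Omega> M" "a \<in> M" "b \<in> M" shows "a - b \<in> M"
proof - interpret sigma_algebra \<Omega> M by fact show ?thesis using assms(2,3) by (rule Diff) qed
lemma sa_UN: assumes "sigma_algebra \<Omega> M" "\<And>i. a i \<in> M" shows "(\<Union>i::nat. a i) \<in> M"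
proof - interpret sigma_algebra \<Omega> M by fact show ?thesis using assms(2) by auto qed

lemma optional_section:
  assumes sa: "\<And>t. t \<ge> 0 \<Longrightarrow> sigma_algebra \<Omega> (F t)" and t: "t \<ge> 0"
    and S: "S \<in> optional_sa \<Omega> F"
  shows "{\<omega>\<in>\<Omega>. (t,\<omega>) \<in> S} \<in> F t"
  using S unfolding optional_sa_def
proof (induction rule: sigma_sets.induct)
  case (Basic a)
  then obtain X B where a: "a = {p \<in> {0..} \<times> \<Omega>. X p \<in> B}" and X: "cadlag_adapted \<Omega> F X"
    and B: "B \<in> sets borel" by blast
  have "{\<omega>\<in>\<Omega>. (t,\<omega>) \<in> a} = {\<omega>\<in>\<Omega>. X (t, \<omega>) \<in> B}" using t a by auto
  then show ?case using X B t unfolding cadlag_adapted_def by auto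
next
  case Empty
  then show ?case using sa_empty[OF sa[OF t]] by simp
next
  case (Compl a)
  have "{\<omega>\<in>\<Omega>. (t,\<omega>) \<in> {0..} \<times> \<Omega> - a} = \<Omega> - {\<omega>\<in>\<Omega>. (t,\<omega>) \<in> a}" using t by auto
  then show ?case using sa_compl[OF sa[OF t] Compl.IH] by simp
next
  case (Union a)
  have "{\<omega>\<in>\<Omega>. (t,\<omega>) \<in> (\<Union>i. a i)} = (\<Union>i. {\<omega>\<in>\<Omega>. (t,\<omega>) \<in> a i})" by auto
  then show ?case using sa_UN[OF sa[OF t], of "\<lambda>i. {\<omega>\<in>\<Omega>. (t,\<omega>) \<in> a i}"] Union.IH
    by auto
qed

lemma nmid_le_iff: "nmid x (ennreal t) \<le> ennreal t \<longleftrightarrow> x \<le> ennreal t"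
  unfolding nmid_def by (auto simp: top_unique)

lemma prod_section:
  fixes \<tau> :: "'a \<Rightarrow> ennreal"
  assumes sa: "\<And>t. t \<ge> 0 \<Longrightarrow> sigma_algebra \<Omega> (F t)" and t: "t \<ge> 0"
    and H: "sigma_algebra \<Omega> H" "gen_rv \<Omega> (\<lambda>\<omega>. nmid (\<tau> \<omega>) (ennreal t)) \<subseteq> H" "F t \<subseteq> H"
    and W: "W \<in> sigma_sets (UNIV \<times> ({0..} \<times> \<Omega>))
          {A \<times> C | A C. A \<in> sets (borel :: ennreal measure) \<and> C \<in> optional_sa \<Omega> F}"
  shows "{\<omega>\<in>\<Omega>. \<tau> \<omega> \<le> ennreal t \<and> (\<tau> \<omega>, (t, \<omega>)) \<in> W} \<in> H"
  using W
proof (induction rule: sigma_sets.induct)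
  case (Basic a)
  then obtain A C where a: "a = A \<times> C" and A: "A \<in> sets (borel :: ennreal measure)"
    and C: "C \<in> optional_sa \<Omega> F" by blast
  have e: "{\<omega>\<in>\<Omega>. \<tau> \<omega> \<le> ennreal t \<and> (\<tau> \<omega>, (t, \<omega>)) \<in> a} =
     ((\<lambda>\<omega>. nmid (\<tau> \<omega>) (ennreal t)) -` (A \<inter> {..ennreal t}) \<inter> \<Omega>) \<inter> {\<omega>\<in>\<Omega>. (t,\<omega>) \<in> C}"
    using a by (auto simp: nmid_def top_unique split: if_splits)
  have "A \<inter> {..ennreal t} \<in> sets (borel :: ennreal measure)" using A by measurable
  then have "(\<lambda>\<omega>. nmid (\<tau> \<omega>) (ennreal t)) -` (A \<inter> {..ennreal t}) \<inter> \<Omega> \<in> H"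
    using H(2) unfolding gen_rv_def by blast
  moreover have "{\<omega>\<in>\<Omega>. (t,\<omega>) \<in> C} \<in> H" using optional_section[OF sa t C] H(3) by blast
  ultimately show ?case unfolding e using sa_Int[OF H(1)] by blast
next
  case Empty
  then show ?case using sa_empty[OF H(1)] by simp
next
  case (Compl a)
  have le: "{\<omega>\<in>\<Omega>. \<tau> \<omega> \<le> ennreal t} \<in> H"
  proof -
    have "{\<omega>\<in>\<Omega>. \<tau> \<omega> \<le> ennreal t} = (\<lambda>\<omega>. nmid (\<tau> \<omega>) (ennreal t)) -` {..ennreal t} \<inter> \<Omega>"
      by (auto simp: nmid_le_iff)
    moreover have "{..ennreal t} \<in> sets (borel :: ennreal measure)" by measurable
    ultimately show ?thesis using H(2) unfolding gen_rv_def by blast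
  qed
  have "{\<omega>\<in>\<Omega>. \<tau> \<omega> \<le> ennreal t \<and> (\<tau> \<omega>, (t, \<omega>)) \<in> UNIV \<times> ({0..} \<times> \<Omega>) - a}
     = {\<omega>\<in>\<Omega>. \<tau> \<omega> \<le> ennreal t} - {\<omega>\<in>\<Omega>. \<tau> \<omega> \<le> ennreal t \<and> (\<tau> \<omega>, (t, \<omega>)) \<in> a}"
    using t by auto
  then show ?case using sa_Diff[OF H(1) le Compl.IH] by simp
next
  case (Union a)
  have "{\<omega>\<in>\<Omega>. \<tau> \<omega> \<le> ennreal t \<and> (\<tau> \<omega>, (t, \<omega>)) \<in> (\<Union>i. a i)} =
     (\<Union>i. {\<omega>\<in>\<Omega>. \<tau> \<omega> \<le> ennreal t \<and> (\<tau> \<omega>, (t, \<omega>)) \<in> a i})" by auto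
  then show ?case using sa_UN[OF H(1), of
      "\<lambda>i. {\<omega>\<in>\<Omega>. \<tau> \<omega> \<le> ennreal t \<and> (\<tau> \<omega>, (t, \<omega>)) \<in> a i}"] Union.IH
    by auto
qed

lemma null_sa_char:
  assumes "B \<in> null_sa Q (sigma_sets (space Q) G)"
  shows "\<exists>Z0\<in>sigma_sets (space Q) G. Z0 \<in> null_sets Q \<and> (B \<subseteq> Z0 \<or> space Q - B \<subseteq> Z0)"
  using assms unfolding null_sa_def
proof (induction rule: sigma_sets.induct)
  case (Basic a)
  then show ?case by (auto simp: null_sets_def)
next
  case Empty
  have "{} \<in> sigma_sets (space Q) G" by (rule sigma_sets.Empty)
  then show ?case by auto
next
  case (Compl a)
  then obtain Z0 where "Z0\<in>sigma_sets (space Q) G" "Z0 \<in> null_sets Q" "a \<subseteq> Z0 \<or> space Q - a \<subseteq> Z0" by blast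
  then show ?case by blast
next
  case (Union a)
  show ?case
  proof (cases "\<exists>j. \<exists>Z0\<in>sigma_sets (space Q) G. Z0 \<in> null_sets Q \<and> space Q - a j \<subseteq> Z0")
    case True
    then obtain j Z0 where "Z0\<in>sigma_sets (space Q) G" "Z0 \<in> null_sets Q" "space Q - a j \<subseteq> Z0" by blast
    then show ?thesis by blast
  next
    case False
    then have "\<forall>i. \<exists>Z0. Z0\<in>sigma_sets (space Q) G \<and> Z0 \<in> null_sets Q \<and> a i \<subseteq> Z0" using Union.IH by blast
    then obtain f where f: "\<And>i. f i \<in> sigma_sets (space Q) G" "\<And>i. f i \<in> null_sets Q" "\<And>i. a i \<subseteq> f i"
      by metis
    have "(\<Union>i. f i) \<in> sigma_sets (space Q) G" using f(1) by (rule sigma_sets.Union)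
    moreover have "(\<Union>i. f i) \<in> null_sets Q" using f(2) by (rule null_sets_UN)
    moreover have "(\<Union>i. a i) \<subseteq> (\<Union>i. f i)" using f(3) by blast
    ultimately show ?thesis by blast
  qed
qed

lemma nmid_meas: "(\<lambda>x. nmid x (ennreal t)) \<in> borel_measurable borel"
  unfolding nmid_def by measurable

lemma nmid_min: assumes "0 \<le> t" "t < s" shows "nmid (min x (ennreal s)) (ennreal t) = nmid x (ennreal t)"
proof -
  have ts: "ennreal t < ennreal s" using assms by (simp add: ennreal_lessI)
  show ?thesis unfolding nmid_def using ts
    by (auto simp: min_def dest: order.trans)
qed

theorem mainTheorem2:
  fixes Q :: "'a measure" and F :: "real \<Rightarrow> 'a set set" and \<tau> :: "'a \<Rightarrow> ennreal"
  assumes "prob_space Q"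
    and "is_filtration Q F"
    and "right_continuous_filtration F"
    and "null_sa Q (F_infty (space Q) F) \<subseteq> F 0"
    and "\<tau> \<in> borel_measurable Q"
    and "global_optional_splitting Q F \<tau>"
  shows "\<forall>t\<ge>0. G_filt Q F \<tau> t =
           sigma_sets (space Q) (N_sa Q F \<tau> \<union> gen_rv (space Q) (\<lambda>\<omega>. nmid (\<tau> \<omega>) (ennreal t)) \<union> F t)"
proof (intro allI impI)
  fix t :: real assume t: "t \<ge> 0"
  define \<Omega> where "\<Omega> = space Q"
  define N where "N = N_sa Q F \<tau>"
  define G where "G = G_filt Q F \<tau>"
  define R where "R = sigma_sets \<Omega> (N \<union> gen_rv \<Omega> (\<lambda>\<omega>. nmid (\<tau> \<omega>) (ennreal t)) \<union> F t)"
  have Fsa: "\<And>s. s \<ge> 0 \<Longrightarrow> sigma_algebra \<Omega> (F s)" and FQ: "\<And>s. s \<ge> 0 \<Longrightarrow> F s \<subseteq> sets Q"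
    and Fmono: "\<And>s u. 0 \<le> s \<Longrightarrow> s \<le> u \<Longrightarrow> F s \<subseteq> F u"
    using assms(2) unfolding is_filtration_def \<Omega>_def by auto
  have FP: "\<And>s. s \<ge> 0 \<Longrightarrow> F s \<subseteq> Pow \<Omega>" using FQ sets.sets_into_space unfolding \<Omega>_def by blast
  define Ngen where "Ngen = {B. \<exists>A\<in>join_sa (space Q) (gen_rv (space Q) \<tau>) (F_infty (space Q) F).
      A \<in> sets Q \<and> emeasure Q A = 0 \<and> B \<subseteq> A}"
  have NgenP: "Ngen \<subseteq> Pow \<Omega>" unfolding Ngen_def \<Omega>_def using sets.sets_into_space by blast
  have Ndef: "N = sigma_sets \<Omega> Ngen" unfolding N_def N_sa_def null_sa_def Ngen_def \<Omega>_def by simp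
  have NP: "N \<subseteq> Pow \<Omega>" unfolding Ndef using sigma_sets_into_sp[OF NgenP] by blast
  have GP: "\<And>s. s \<ge> 0 \<Longrightarrow> N \<union> (\<Inter>u\<in>{s<..}. join_sa \<Omega> (F u) (gen_rv \<Omega> (\<lambda>\<omega>. min (\<tau> \<omega>) (ennreal u)))) \<subseteq> Pow \<Omega>"
  proof -
    fix s :: real assume s: "s \<ge> 0"
    have "join_sa \<Omega> (F (s+1)) (gen_rv \<Omega> (\<lambda>\<omega>. min (\<tau> \<omega>) (ennreal (s+1)))) \<subseteq> Pow \<Omega>"
      unfolding join_sa_def
      by (rule sigma_sets_into_sp[THEN PowI, THEN subsetI]) (use FP[of "s+1"] s in \<open>auto simp: gen_rv_def\<close>)
    moreover have "s + 1 \<in> {s<..}" by simp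
    ultimately show "N \<union> (\<Inter>u\<in>{s<..}. join_sa \<Omega> (F u) (gen_rv \<Omega> (\<lambda>\<omega>. min (\<tau> \<omega>) (ennreal u)))) \<subseteq> Pow \<Omega>"
      using NP by blast
  qed
  have Gdef: "\<And>s. G s = sigma_sets \<Omega> (N \<union> (\<Inter>u\<in>{s<..}. join_sa \<Omega> (F u) (gen_rv \<Omega> (\<lambda>\<omega>. min (\<tau> \<omega>) (ennreal u)))))"
    unfolding G_def G_filt_def join_sa_def N_def \<Omega>_def by simp
  have Gsa: "\<And>s. s \<ge> 0 \<Longrightarrow> sigma_algebra \<Omega> (G s)"
    unfolding Gdef by (rule sigma_algebra_sigma_sets, erule GP)
  have Gmono: "\<And>s u. s \<le> u \<Longrightarrow> G s \<subseteq> G u"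
    unfolding Gdef by (rule sigma_sets_mono') auto
  have RP: "N \<union> gen_rv \<Omega> (\<lambda>\<omega>. nmid (\<tau> \<omega>) (ennreal t)) \<union> F t \<subseteq> Pow \<Omega>"
    using NP FP[OF t] by (auto simp: gen_rv_def)
  have Rsa: "sigma_algebra \<Omega> R" unfolding R_def by (rule sigma_algebra_sigma_sets[OF RP])
  have NR: "N \<subseteq> R" and genR: "gen_rv \<Omega> (\<lambda>\<omega>. nmid (\<tau> \<omega>) (ennreal t)) \<subseteq> R" and FR: "F t \<subseteq> R"
    unfolding R_def by (auto intro: sigma_sets.Basic)
  have "R \<subseteq> G t"
    unfolding R_def
  proof (rule sigma_algebra.sigma_sets_subset[OF Gsa[OF t]])
    show "N \<union> gen_rv \<Omega> (\<lambda>\<omega>. nmid (\<tau> \<omega>) (ennreal t)) \<union> F t \<subseteq> G t"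
    proof (intro Un_least)
      show "N \<subseteq> G t" unfolding Gdef by (auto intro: sigma_sets.Basic)
      show "F t \<subseteq> G t" unfolding Gdef join_sa_def
        using Fmono[OF t] by (auto intro!: sigma_sets.Basic) (meson less_eq_real_def subsetD)
      show "gen_rv \<Omega> (\<lambda>\<omega>. nmid (\<tau> \<omega>) (ennreal t)) \<subseteq> G t"
      proof
        fix x assume "x \<in> gen_rv \<Omega> (\<lambda>\<omega>. nmid (\<tau> \<omega>) (ennreal t))"
        then obtain B where x: "x = (\<lambda>\<omega>. nmid (\<tau> \<omega>) (ennreal t)) -` B \<inter> \<Omega>" and B: "B \<in> sets borel"
          unfolding gen_rv_def by blast
        have B': "(\<lambda>x. nmid x (ennreal t)) -` B \<in> sets borel"
          using measurable_sets[OF nmid_meas B] by simp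
        have "x \<in> join_sa \<Omega> (F u) (gen_rv \<Omega> (\<lambda>\<omega>. min (\<tau> \<omega>) (ennreal u)))" if u: "u > t" for u
        proof -
          have "x = (\<lambda>\<omega>. min (\<tau> \<omega>) (ennreal u)) -` ((\<lambda>x. nmid x (ennreal t)) -` B) \<inter> \<Omega>"
            unfolding x using nmid_min[OF t u] by auto
          then have "x \<in> gen_rv \<Omega> (\<lambda>\<omega>. min (\<tau> \<omega>) (ennreal u))" unfolding gen_rv_def using B' by blast
          then show ?thesis unfolding join_sa_def by (auto intro: sigma_sets.Basic)
        qed
        then show "x \<in> G t" unfolding Gdef by (auto intro: sigma_sets.Basic)
      qed
    qed
  qed
  moreover have "G t \<subseteq> R"
  proof
    fix A assume A: "A \<in> G t"
    have AP: "A \<subseteq> \<Omega>" using sigma_sets_into_sp[OF GP[OF t]] A unfolding Gdef by blast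
    define Y where "Y = (\<lambda>p::real \<times> 'a. if t \<le> fst p \<and> snd p \<in> A then 1 else (0::real))"
    have adapt: "{\<omega>\<in>\<Omega>. Y (s, \<omega>) \<in> B} \<in> G s" if s: "s \<ge> 0" for s B
    proof -
      have sa: "sigma_algebra \<Omega> (G s)" using Gsa[OF s] .
      have e: "{} \<in> G s" using sa_empty[OF sa] .
      have om: "\<Omega> \<in> G s" using sa_compl[OF sa e] by simp
      show ?thesis
      proof (cases "t \<le> s")
        case True
        have a: "A \<in> G s" using Gmono[OF True] A by blast
        have c: "\<Omega> - A \<in> G s" using sa_compl[OF sa a] .
        have "{\<omega>\<in>\<Omega>. Y (s, \<omega>) \<in> B} = (if 1 \<in> B then A else {}) \<union> (if 0 \<in> B then \<Omega> - A else {})"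
          using True AP unfolding Y_def by auto
        then show ?thesis using sa_Un[OF sa] e om a c by simp
      next
        case False
        have "{\<omega>\<in>\<Omega>. Y (s, \<omega>) \<in> B} = (if 0 \<in> B then \<Omega> else {})"
          using False unfolding Y_def by auto
        then show ?thesis using e om by simp
      qed
    qed
    have rc: "((\<lambda>u. Y (u, \<omega>)) \<longlongrightarrow> Y (s, \<omega>)) (at_right s)" for s \<omega>
    proof (rule tendsto_eventually)
      show "\<forall>\<^sub>F u in at_right s. Y (u, \<omega>) = Y (s, \<omega>)"
      proof (cases "t \<le> s")
        case True
        show ?thesis unfolding eventually_at_right_field
          by (rule exI[of _ "s+1"]) (use True in \<open>auto simp: Y_def\<close>)
      next
        case False
        show ?thesis unfolding eventually_at_right_field
          by (rule exI[of _ "t"]) (use False in \<open>auto simp: Y_def\<close>)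
      qed
    qed
    have ll: "\<exists>l. ((\<lambda>u. Y (u, \<omega>)) \<longlongrightarrow> l) (at_left s)" for s \<omega>
    proof (cases "t < s")
      case True
      have "\<forall>\<^sub>F u in at_left s. Y (u, \<omega>) = (if \<omega> \<in> A then 1 else 0)"
        unfolding eventually_at_left_field
        by (rule exI[of _ "t"]) (use True in \<open>auto simp: Y_def\<close>)
      then show ?thesis by (blast intro: tendsto_eventually)
    next
      case False
      have "\<forall>\<^sub>F u in at_left s. Y (u, \<omega>) = 0"
        unfolding eventually_at_left_field
        by (rule exI[of _ "s - 1"]) (use False in \<open>auto simp: Y_def\<close>)
      then show ?thesis by (blast intro: tendsto_eventually)
    qed
    have cad: "cadlag_adapted \<Omega> G Y"
      unfolding cadlag_adapted_def using adapt rc ll by blast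
    have optY: "optional_process (space Q) (G_filt Q F \<tau>) Y"
      unfolding optional_process_def optional_sa_def \<Omega>_def[symmetric] G_def[symmetric]
      using cad by (blast intro: sigma_sets.Basic)
    note spl = assms(6)[unfolded global_optional_splitting_def, rule_format, OF optY, folded \<Omega>_def N_def]
    obtain Y' Y'' Z where Y': "optional_process \<Omega> F Y'" and Y'': "borel_optional_measurable \<Omega> F Y''"
      and Z: "Z \<in> N" "Qnull Q Z"
      and eq0: "\<forall>\<omega>\<in>\<Omega> - Z. \<forall>s\<ge>0.
                 Y (s, \<omega>) = (if ennreal s < \<tau> \<omega> then Y' (s, \<omega>) else Y'' (\<tau> \<omega>) (s, \<omega>))"
      using spl by blast
    have eq: "\<And>\<omega> s. \<omega> \<in> \<Omega> - Z \<Longrightarrow> s \<ge> 0 \<Longrightarrow>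
                 Y (s, \<omega>) = (if ennreal s < \<tau> \<omega> then Y' (s, \<omega>) else Y'' (\<tau> \<omega>) (s, \<omega>))"
      using eq0 by blast
    define E1 where "E1 = {\<omega>\<in>\<Omega>. (t,\<omega>) \<in> {p \<in> {0..} \<times> \<Omega>. Y' p \<in> {1}}}"
    define Le where "Le = {\<omega>\<in>\<Omega>. \<tau> \<omega> \<le> ennreal t}"
    define W where "W = {(u, p). p \<in> {0..} \<times> \<Omega> \<and> Y'' u p \<in> {1}}"
    define E2 where "E2 = {\<omega>\<in>\<Omega>. \<tau> \<omega> \<le> ennreal t \<and> (\<tau> \<omega>, (t, \<omega>)) \<in> W}"
    have E1R: "E1 \<in> R"
    proof -
      have "{p \<in> {0..} \<times> \<Omega>. Y' p \<in> {1}} \<in> optional_sa \<Omega> F"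
        using bspec[OF Y'[unfolded optional_process_def] closed_singleton[THEN borel_closed, of "1::real"]] .
      from optional_section[where F=F and t=t and \<Omega>=\<Omega>, OF Fsa t this]
      show ?thesis unfolding E1_def by (rule subsetD[OF FR])
    qed
    have LeR: "Le \<in> R"
    proof -
      have "Le = (\<lambda>\<omega>. nmid (\<tau> \<omega>) (ennreal t)) -` {..ennreal t} \<inter> \<Omega>"
        unfolding Le_def by (auto simp: nmid_le_iff)
      moreover have "{..ennreal t} \<in> sets (borel :: ennreal measure)" by measurable
      ultimately show ?thesis using genR unfolding gen_rv_def by blast
    qed
    have E2R: "E2 \<in> R"
    proof -
      have "W \<in> sigma_sets (UNIV \<times> ({0..} \<times> \<Omega>))
          {A \<times> C | A C. A \<in> sets (borel :: ennreal measure) \<and> C \<in> optional_sa \<Omega> F}"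
        using bspec[OF Y''[unfolded borel_optional_measurable_def] closed_singleton[THEN borel_closed, of "1::real"]]
        unfolding W_def .
      from prod_section[where F=F and t=t and \<Omega>=\<Omega> and \<tau>=\<tau>, OF Fsa t Rsa genR FR this]
      show ?thesis unfolding E2_def .
    qed
    have ER: "(E1 - Le) \<union> E2 \<in> R" using sa_Un[OF Rsa sa_Diff[OF Rsa E1R LeR] E2R] .
    have ZP: "Z \<subseteq> \<Omega>" using Z(1) NP by blast
    have AZ: "A \<inter> Z \<in> N"
    proof -
      have "Z \<in> null_sa Q (sigma_sets (space Q) (gen_rv (space Q) \<tau> \<union> F_infty (space Q) F))"
        using Z(1) unfolding N_def N_sa_def join_sa_def .
      from null_sa_char[OF this] obtain Z0 where Z0: "Z0 \<in> sigma_sets (space Q) (gen_rv (space Q) \<tau> \<union> F_infty (space Q) F)"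
        "Z0 \<in> null_sets Q" "Z \<subseteq> Z0 \<or> space Q - Z \<subseteq> Z0" by blast
      obtain Z1 where Z1: "Z1 \<in> sets Q" "Z \<subseteq> Z1" "emeasure Q Z1 = 0" using Z(2) unfolding Qnull_def by blast
      have "Z \<subseteq> Z0"
      proof (rule ccontr)
        assume "\<not> Z \<subseteq> Z0"
        then have "space Q - Z \<subseteq> Z0" using Z0(3) by blast
        then have "space Q \<subseteq> Z0 \<union> Z1" using Z1(2) by blast
        moreover have "Z0 \<union> Z1 \<in> null_sets Q" using Z0(2) Z1 by auto
        ultimately have "space Q \<in> null_sets Q" using null_sets_subset by blast
        then show False using prob_space.emeasure_space_1[OF assms(1)] by auto
      qed
      then have "A \<inter> Z \<in> Ngen" unfolding Ngen_def join_sa_def using Z0 by (auto simp: null_sets_def)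
      then show ?thesis unfolding Ndef by (rule sigma_sets.Basic)
    qed
    have "A = (((E1 - Le) \<union> E2) - Z) \<union> (A \<inter> Z)"
    proof (intro set_eqI iffI)
      fix \<omega> assume w: "\<omega> \<in> A"
      show "\<omega> \<in> (((E1 - Le) \<union> E2) - Z) \<union> (A \<inter> Z)"
      proof (cases "\<omega> \<in> Z")
        case False
        have wO: "\<omega> \<in> \<Omega>" using w AP by blast
        have "Y (t, \<omega>) = 1" using w unfolding Y_def by simp
        then show ?thesis using eq[of \<omega> t] False wO t
          unfolding E1_def Le_def E2_def W_def by (auto split: if_splits simp: not_less)
      qed (use w in auto)
    next
      fix \<omega> assume w: "\<omega> \<in> (((E1 - Le) \<union> E2) - Z) \<union> (A \<inter> Z)"
      show "\<omega> \<in> A"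
      proof (rule ccontr)
        assume nA: "\<omega> \<notin> A"
        then have wZ: "\<omega> \<notin> Z" and wE: "\<omega> \<in> (E1 - Le) \<union> E2" using w by auto
        then have wO: "\<omega> \<in> \<Omega>" unfolding E1_def E2_def by auto
        have "Y (t, \<omega>) = 0" using nA unfolding Y_def by simp
        then show False using eq[of \<omega> t] wZ wO t wE
          unfolding E1_def Le_def E2_def W_def by (auto split: if_splits simp: not_less)
      qed
    qed
    moreover have "((E1 - Le) \<union> E2) - Z \<in> R" using sa_Diff[OF Rsa ER] Z(1) NR by blast
    then have "(((E1 - Le) \<union> E2) - Z) \<union> (A \<inter> Z) \<in> R"
      by (rule sa_Un[OF Rsa _ NR[THEN subsetD, OF AZ]])
    ultimately show "A \<in> R" by simp
  qed
  ultimately show "G_filt Q F \<tau> t = sigma_sets (space Q) (N_sa Q F \<tau> \<union> gen_rv (space Q) (\<lambda>\<omega>. nmid (\<tau> \<omega>) (ennreal t)) \<union> F t)"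
    unfolding G_def R_def N_def \<Omega>_def by blast
qed

end
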